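(* Let $\underline{\lambda}=(\lambda_1\ge\dots\ge\lambda_{n+1})$ and $\underline{\mu}=(\mu_1\ge\dots\ge\mu_n)$ be real sequences such that there exists $p\in\mathcal{O}_\Lambda$ whose bottom-right $n\times n$ principal submatrix is $\mathrm{diag}(\mu_1,\dots,\mu_n)$ (equivalently, $\lambda_1\ge\mu_1\ge\lambda_2\ge\dots\ge\mu_n\ge\lambda_{n+1}$). Let $\mu\in[\underline{\mu}]$ be such that the component of the interlacing pattern of $(\underline{\lambda},\underline{\mu})$ labelled $\mu$ is not an M-shape. Then $C_\mu=0$ if and only if the component labelled $\mu$ is a W-shape.
   Context: $\mathcal{O}_\Lambda$ is the set of $(n+1)\times(n+1)$ Hermitian matrices with eigenvalues $\lambda_1,\dots,\lambda_{n+1}$. Notation: $[\underline{\tau}]$ is the set of distinct values of a finite sequence $\underline{\tau}$, $n_v(\underline{\tau})$ the number of occurrences of $v$ in it. For each value $v$ occurring in $\underline{\lambda}$ or $\underline{\mu}$, the component of the interlacing pattern labelled $v$ is an M-shape if $n_v(\underline{\mu})=n_v(\underline{\lambda})+1$, a W-shape if $n_v(\underline{\lambda})=n_v(\underline{\mu})+1$, and a parallelogram-shape if $n_v(\underline{\lambda})=n_v(\underline{\mu})$ (exactly one of these holds). For $\tau\in[\underline{\mu}]$ with M-shape component, $r_\tau>0$ is defined by $r_\tau^2=-\prod_{\lambda\in[\underline{\lambda}],\,\text{W-shape}}(\tau-\lambda)\prod_{\sigma\in[\underline{\mu}],\,\text{M-shape},\,\sigma\ne\tau}\frac{1}{\tau-\sigma}$;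 otherwise $r_\tau=0$. For $\mu\in[\underline{\mu}]$ whose component is not an M-shape, $C_\mu=\sum_{i=1}^{n+1}\lambda_i-\sum_{i=1}^n\mu_i-\mu+\sum_{\tau\in[\underline{\mu}],\,\text{M-shape}}\frac{r_\tau^2}{\mu-\tau}$. *)

theory Defs
  imports Complex_Main
begin

text \<open>Sequences are functions nat => real; lam is indexed by 1..n+1, mu by 1..n.\<close>

definition lam_vals :: "nat \<Rightarrow> (nat \<Rightarrow> real) \<Rightarrow> real set" where
  "lam_vals n lam = lam ` {1..n+1}"

definition mu_vals :: "nat \<Rightarrow> (nat \<Rightarrow> real) \<Rightarrow> real set" where
  "mu_vals n mu = mu ` {1..n}"

definition n_lam :: "nat \<Rightarrow> (nat \<Rightarrow> real) \<Rightarrow> real \<Rightarrow> nat" where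
  "n_lam n lam v = card {i \<in> {1..n+1}. lam i = v}"

definition n_mu :: "nat \<Rightarrow> (nat \<Rightarrow> real) \<Rightarrow> real \<Rightarrow> nat" where
  "n_mu n mu v = card {i \<in> {1..n}. mu i = v}"

definition M_shape :: "nat \<Rightarrow> (nat \<Rightarrow> real) \<Rightarrow> (nat \<Rightarrow> real) \<Rightarrow> real \<Rightarrow> bool" where
  "M_shape n lam mu v \<longleftrightarrow> n_mu n mu v = n_lam n lam v + 1"

definition W_shape :: "nat \<Rightarrow> (nat \<Rightarrow> real) \<Rightarrow> (nat \<Rightarrow> real) \<Rightarrow> real \<Rightarrow> bool" where
  "W_shape n lam mu v \<longleftrightarrow> n_lam n lam v = n_mu n mu v + 1"

definition P_shape :: "nat \<Rightarrow> (nat \<Rightarrow> real) \<Rightarrow> (nat \<Rightarrow> real) \<Rightarrow> real \<Rightarrow> bool" where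
  "P_shape n lam mu v \<longleftrightarrow> n_lam n lam v = n_mu n mu v"

text \<open>The right-hand side of the defining equation of r_tau^2.\<close>
definition r_sq_expr :: "nat \<Rightarrow> (nat \<Rightarrow> real) \<Rightarrow> (nat \<Rightarrow> real) \<Rightarrow> real \<Rightarrow> real" where
  "r_sq_expr n lam mu \<tau> =
     - (\<Prod>l\<in>{l \<in> lam_vals n lam. W_shape n lam mu l}. (\<tau> - l))
     * (\<Prod>\<sigma>\<in>{\<sigma> \<in> mu_vals n mu. M_shape n lam mu \<sigma> \<and> \<sigma> \<noteq> \<tau>}. 1 / (\<tau> - \<sigma>))"

definition r_coef :: "nat \<Rightarrow> (nat \<Rightarrow> real) \<Rightarrow> (nat \<Rightarrow> real) \<Rightarrow> real \<Rightarrow> real" where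
  "r_coef n lam mu \<tau> =
     (if \<tau> \<in> mu_vals n mu \<and> M_shape n lam mu \<tau> then sqrt (r_sq_expr n lam mu \<tau>) else 0)"

definition C_coef :: "nat \<Rightarrow> (nat \<Rightarrow> real) \<Rightarrow> (nat \<Rightarrow> real) \<Rightarrow> real \<Rightarrow> real" where
  "C_coef n lam mu m =
     (\<Sum>i=1..n+1. lam i) - (\<Sum>i=1..n. mu i) - m
     + (\<Sum>\<tau>\<in>{\<tau> \<in> mu_vals n mu. M_shape n lam mu \<tau>}. (r_coef n lam mu \<tau>)^2 / (m - \<tau>))"

end

theory Submission
  imports Defs
begin


lemma aux:
  fixes x s w c S :: real
  assumes "x \<noteq> s"
  shows "(x-w)*(x-c)/(x-s) + (s-w)*S/(x-s) = x - (c+w-s) + ((s-w)*(s-c+S))/(x-s)"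
proof -
  have n: "x - s \<noteq> 0" using assms by simp
  have "(x-w)*(x-c) + (s-w)*S = (x - (c+w-s))*(x-s) + (s-w)*(s-c+S)" by (simp add: algebra_simps)
  then have "((x-w)*(x-c) + (s-w)*S)/(x-s) = ((x - (c+w-s))*(x-s) + (s-w)*(s-c+S))/(x-s)" by simp
  then show ?thesis using n by (simp add: add_divide_distrib)
qed

lemma pf:
  fixes W M :: "real set"
  assumes "finite M" "finite W" "card W = card M + 1" "x \<notin> M"
  shows "(\<Prod>w\<in>W. x-w)/(\<Prod>s\<in>M. x-s) = x - (\<Sum>W - \<Sum>M)
     + (\<Sum>s\<in>M. ((\<Prod>w\<in>W. s-w) * (\<Prod>t\<in>M-{s}. 1/(s-t)))/(x-s))"
  using assms
proof (induction M arbitrary: W x rule: finite_induct)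
  case empty
  then obtain w where "W = {w}" by (auto simp: card_1_singleton_iff)
  then show ?case by simp
next
  case (insert s M W x)
  from insert.prems have "W \<noteq> {}" by auto
  then obtain w where wW: "w \<in> W" by auto
  define W' where "W' = W - {w}"
  have fW': "finite W'" using insert.prems W'_def by auto
  have cW': "card W' = card M + 1" using insert W'_def wW by auto
  define a' where "a' t = (\<Prod>v\<in>W'. t-v) * (\<Prod>u\<in>M-{t}. 1/(t-u))" for t
  have IH: "(\<Prod>v\<in>W'. y-v)/(\<Prod>u\<in>M. y-u) = y - (\<Sum>W' - \<Sum>M) + (\<Sum>t\<in>M. a' t/(y-t))"
    if "y \<notin> M" for y using insert.IH[OF fW' cW' that] unfolding a'_def by simp
  have xs: "x \<noteq> s" "x \<notin> M" using insert.prems by auto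
  define c' where "c' = \<Sum>W' - \<Sum>M"
  have Q'ne: "(\<Prod>u\<in>M. y-u) \<noteq> 0" if "y \<notin> M" for y
    using that insert.hyps(1) by (auto simp: prod_zero_iff)
  have PW: "(\<Prod>v\<in>W. y-v) = (y-w) * (\<Prod>v\<in>W'. y-v)" for y
    using wW insert.prems(1) unfolding W'_def by (simp add: prod.remove)
  have sumW: "\<Sum>W = w + \<Sum>W'"
    using wW insert.prems(1) unfolding W'_def by (simp add: sum.remove)
  have as: "(\<Prod>v\<in>W. s-v) * (\<Prod>t\<in>insert s M-{s}. 1/(s-t))
      = (s-w) * (s - c' + (\<Sum>t\<in>M. a' t/(s-t)))"
  proof -
    have "insert s M - {s} = M" using insert.hyps by auto
    then have "(\<Prod>v\<in>W. s-v) * (\<Prod>t\<in>insert s M-{s}. 1/(s-t))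
        = (s-w) * ((\<Prod>v\<in>W'. s-v) / (\<Prod>u\<in>M. s-u))"
      by (simp add: PW prod_dividef)
    also have "\<dots> = (s-w) * (s - c' + (\<Sum>t\<in>M. a' t/(s-t)))"
      using IH[OF insert.hyps(2)] c'_def by simp
    finally show ?thesis .
  qed
  have at: "(\<Prod>v\<in>W. t-v) * (\<Prod>u\<in>insert s M-{t}. 1/(t-u)) = a' t * (t-w)/(t-s)"
    if "t \<in> M" for t
  proof -
    have "insert s M - {t} = insert s (M-{t})" using insert.hyps that by auto
    moreover have "s \<notin> M - {t}" using insert.hyps by auto
    ultimately have "(\<Prod>u\<in>insert s M-{t}. 1/(t-u)) = 1/(t-s) * (\<Prod>u\<in>M-{t}. 1/(t-u))"
      using insert.hyps(1) by simp
    then show ?thesis unfolding a'_def by (simp add: PW)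
  qed
  have trm: "a' t * (x-w)/((x-s)*(x-t)) = (s-w)*(a' t/(s-t))/(x-s) + (a' t * (t-w)/(t-s))/(x-t)"
    if "t \<in> M" for t
  proof -
    have "t \<noteq> s" "x \<noteq> t" using that insert.hyps xs by auto
    then have n: "x - s \<noteq> 0" "x - t \<noteq> 0" "t - s \<noteq> 0" "s - t \<noteq> 0" using xs by auto
    have "(s-w)*(a' t/(s-t))/(x-s) + (a' t * (t-w)/(t-s))/(x-t) = ((s-w)*a' t*(x-t) - a' t*(t-w)*(x-s)) / ((s-t)*(x-s)*(x-t))"
      using n by (simp add: divide_simps) (simp add: algebra_simps)
    also have "(s-w)*a' t*(x-t) - a' t*(t-w)*(x-s) = a' t*(x-w)*(s-t)" by (simp add: algebra_simps)
    finally show ?thesis using n by simp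
  qed
  have "(\<Prod>v\<in>W. x-v)/(\<Prod>u\<in>insert s M. x-u) = (x-w)/(x-s) * ((\<Prod>v\<in>W'. x-v)/(\<Prod>u\<in>M. x-u))"
    using insert.hyps by (simp add: PW)
  also have "\<dots> = (x-w)/(x-s) * (x - c' + (\<Sum>t\<in>M. a' t/(x-t)))"
    using IH[OF xs(2)] c'_def by simp
  also have "\<dots> = (x-w)*(x-c')/(x-s) + (\<Sum>t\<in>M. a' t * (x-w)/((x-s)*(x-t)))"
  proof -
    have "(x-w)/(x-s) * (x - c' + (\<Sum>t\<in>M. a' t/(x-t))) = (x-w)/(x-s) * (x - c') + (x-w)/(x-s) * (\<Sum>t\<in>M. a' t/(x-t))"
      by (simp only: distrib_left)
    moreover have "(x-w)/(x-s) * (x - c') = (x-w)*(x-c')/(x-s)" by simp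
    moreover have "(x-w)/(x-s) * (\<Sum>t\<in>M. a' t/(x-t)) = (\<Sum>t\<in>M. a' t * (x-w)/((x-s)*(x-t)))"
      by (simp add: sum_distrib_left mult.commute)
    ultimately show ?thesis by simp
  qed
  also have "\<dots> = (x-w)*(x-c')/(x-s) + (\<Sum>t\<in>M. (s-w)*(a' t/(s-t))/(x-s) + (a' t * (t-w)/(t-s))/(x-t))"
    using trm by simp
  also have "\<dots> = (x-w)*(x-c')/(x-s) + (s-w)*(\<Sum>t\<in>M. a' t/(s-t))/(x-s) + (\<Sum>t\<in>M. (a' t * (t-w)/(t-s))/(x-t))"
    by (simp add: sum.distrib sum_distrib_left sum_divide_distrib)
  also have "\<dots> = x - (c' + w - s) + ((s-w) * (s - c' + (\<Sum>t\<in>M. a' t/(s-t))))/(x-s) + (\<Sum>t\<in>M. (a' t * (t-w)/(t-s))/(x-t))"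
    using aux[OF xs(1), of w c' "\<Sum>t\<in>M. a' t/(s-t)"] by simp
  also have "\<dots> = x - (\<Sum>W - \<Sum>(insert s M)) + (\<Sum>t\<in>insert s M. ((\<Prod>v\<in>W. t-v) * (\<Prod>u\<in>insert s M-{t}. 1/(t-u)))/(x-t))"
  proof -
    have e1: "(\<Sum>t\<in>insert s M. ((\<Prod>v\<in>W. t-v) * (\<Prod>u\<in>insert s M-{t}. 1/(t-u)))/(x-t))
       = ((\<Prod>v\<in>W. s-v) * (\<Prod>u\<in>insert s M-{s}. 1/(s-u)))/(x-s)
         + (\<Sum>t\<in>M. ((\<Prod>v\<in>W. t-v) * (\<Prod>u\<in>insert s M-{t}. 1/(t-u)))/(x-t))"
      using insert.hyps by simp
    have e2: "(\<Sum>t\<in>M. ((\<Prod>v\<in>W. t-v) * (\<Prod>u\<in>insert s M-{t}. 1/(t-u)))/(x-t))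
       = (\<Sum>t\<in>M. (a' t * (t-w)/(t-s))/(x-t))"
      using at by (intro sum.cong) auto
    have e3: "\<Sum>W - \<Sum>(insert s M) = c' + w - s"
      using insert.hyps sumW c'_def by simp
    show ?thesis unfolding e1 e2 e3 as by simp
  qed
  finally show ?case .
qed



lemma lam_mono:
  fixes lam mu :: "nat \<Rightarrow> real" and n :: nat
  assumes il: "\<forall>i\<in>{1..n}. lam i \<ge> mu i \<and> mu i \<ge> lam (i+1)"
    and "1 \<le> i" "i \<le> j" "j \<le> n+1"
  shows "(lam j::real) \<le> lam i"
  using assms(3,4)
proof (induction j rule: dec_induct)
  case base then show ?case by simp
next
  case (step k)
  then have "k \<in> {1..n}" using assms(2) by simp
  then have "mu k \<le> lam k \<and> lam (k+1) \<le> mu k" using il by blast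
  then have "lam (k+1) \<le> lam k" by linarith
  then show ?case using step by simp
qed

lemma mu_mono:
  fixes lam mu :: "nat \<Rightarrow> real" and n :: nat
  assumes il: "\<forall>i\<in>{1..n}. lam i \<ge> mu i \<and> mu i \<ge> lam (i+1)"
    and "1 \<le> i" "i \<le> j" "j \<le> n"
  shows "(mu j::real) \<le> mu i"
  using assms(3,4)
proof (induction j rule: dec_induct)
  case base then show ?case by simp
next
  case (step k)
  then have "k \<in> {1..n}" "k+1 \<in> {1..n}" using assms(2) by simp_all
  then have "mu k \<le> lam k \<and> lam (k+1) \<le> mu k" "mu (k+1) \<le> lam (k+1) \<and> lam (k+1+1) \<le> mu (k+1)" using il by blast+
  then have "mu (k+1) \<le> lam (k+1)" "lam (k+1) \<le> mu k" by linarith+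
  then show ?case using step by simp
qed

lemma tri1:
  fixes lam mu :: "nat \<Rightarrow> real" and n :: nat
  assumes il: "\<forall>i\<in>{1..n}. lam i \<ge> mu i \<and> mu i \<ge> lam (i+1)"
  shows "n_lam n lam v \<le> n_mu n mu v + 1"
proof -
  define S where "S = {i \<in> {1..n+1}. lam i = v}"
  define T where "T = {i \<in> {1..n}. mu i = v}"
  have fS: "finite S" "finite T" unfolding S_def T_def by auto
  show ?thesis
  proof (cases "S = {}")
    case True then show ?thesis unfolding n_lam_def S_def[symmetric] by simp
  next
    case False
    define k where "k = Max S"
    have kS: "k \<in> S" using False fS k_def by simp
    have "S - {k} \<subseteq> T"
    proof
      fix i assume i: "i \<in> S - {k}"
      then have "i < k" using fS k_def by (simp add: order.not_eq_order_implies_strict)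
      moreover have "i \<le> k" using i fS k_def by auto
      ultimately have ik: "i < k" by simp
      have k1: "k \<le> n+1" "1 \<le> i" using kS i unfolding S_def by auto
      have "lam (i+1) \<ge> lam k" using lam_mono[OF il, of "i+1" k] ik k1 by simp
      moreover have "lam i \<ge> mu i" "mu i \<ge> lam (i+1)" using il ik k1 by auto
      moreover have "lam i = v" "lam k = v" using i kS unfolding S_def by auto
      ultimately have "mu i = v" by linarith
      then show "i \<in> T" unfolding T_def using ik k1 by auto
    qed
    then have "card (S - {k}) \<le> card T" using fS by (simp add: card_mono)
    then show ?thesis using kS fS unfolding n_lam_def n_mu_def S_def[symmetric] T_def[symmetric]
      by simp
  qed
qed

lemma tri2:
  fixes lam mu :: "nat \<Rightarrow> real" and n :: nat
  assumes il: "\<forall>i\<in>{1..n}. lam i \<ge> mu i \<and> mu i \<ge> lam (i+1)"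
  shows "n_mu n mu v \<le> n_lam n lam v + 1"
proof -
  define S where "S = {i \<in> {1..n+1}. lam i = v}"
  define T where "T = {i \<in> {1..n}. mu i = v}"
  have fS: "finite S" "finite T" unfolding S_def T_def by auto
  show ?thesis
  proof (cases "T = {}")
    case True then show ?thesis unfolding n_mu_def T_def[symmetric] by simp
  next
    case False
    define k where "k = Max T"
    have kT: "k \<in> T" using False fS k_def by simp
    have "(\<lambda>i. i+1) ` (T - {k}) \<subseteq> S"
    proof
      fix j assume "j \<in> (\<lambda>i. i+1) ` (T - {k})"
      then obtain i where i: "i \<in> T - {k}" and j: "j = i+1" by auto
      then have "i \<le> k" using fS k_def by auto
      then have ik: "i < k" using i by auto
      have k1: "k \<le> n" "1 \<le> i" using kT i unfolding T_def by auto
      have "mu (i+1) \<ge> mu k" using mu_mono[OF il, of "i+1" k] ik k1 by simp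
      moreover have "lam (i+1) \<ge> mu (i+1)" "mu i \<ge> lam (i+1)" using il ik k1 by auto
      moreover have "mu i = v" "mu k = v" using i kT unfolding T_def by auto
      ultimately have "lam (i+1) = v" by linarith
      then show "j \<in> S" unfolding S_def using ik k1 j by auto
    qed
    moreover have "card ((\<lambda>i. i+1) ` (T - {k})) = card (T - {k})"
      by (simp add: card_image)
    ultimately have "card (T - {k}) \<le> card S" using fS by (metis card_mono)
    then show ?thesis using kT fS unfolding n_lam_def n_mu_def S_def[symmetric] T_def[symmetric]
      by simp
  qed
qed

lemma count_sum:
  fixes g :: "real \<Rightarrow> real"
  assumes "finite I"
  shows "(\<Sum>i\<in>I. g (f i)) = (\<Sum>v\<in>f`I. g v * card {i\<in>I. f i = v})"
proof -
  have "(\<Sum>i\<in>I. g (f i)) = (\<Sum>v\<in>f`I. \<Sum>i\<in>{i. i\<in>I \<and> f i = v}. g (f i))"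
    using sum.image_gen[OF assms, of "\<lambda>i. g (f i)" f] by simp
  also have "\<dots> = (\<Sum>v\<in>f`I. g v * card {i\<in>I. f i = v})"
  proof (rule sum.cong)
    fix v assume "v \<in> f ` I"
    have "(\<Sum>i\<in>{i. i\<in>I \<and> f i = v}. g (f i)) = (\<Sum>i\<in>{i. i\<in>I \<and> f i = v}. g v)"
      by (rule sum.cong) auto
    then show "(\<Sum>i\<in>{i. i\<in>I \<and> f i = v}. g (f i)) = g v * card {i\<in>I. f i = v}"
      by (simp add: mult.commute)
  qed simp
  finally show ?thesis .
qed

lemma count_diff:
  fixes g :: "real \<Rightarrow> real" and lam mu :: "nat \<Rightarrow> real" and n :: nat
  assumes il: "\<forall>i\<in>{1..n}. lam i \<ge> mu i \<and> mu i \<ge> lam (i+1)"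
  shows "(\<Sum>i=1..n+1. g (lam i)) - (\<Sum>i=1..n. g (mu i))
     = (\<Sum>v\<in>{l\<in>lam_vals n lam. W_shape n lam mu l}. g v) - (\<Sum>v\<in>{s\<in>mu_vals n mu. M_shape n lam mu s}. g v)"
proof -
  define V where "V = lam_vals n lam \<union> mu_vals n mu"
  have fV: "finite V" unfolding V_def lam_vals_def mu_vals_def by auto
  have L: "(\<Sum>i=1..n+1. g (lam i)) = (\<Sum>v\<in>V. g v * n_lam n lam v)"
  proof -
    have "(\<Sum>i=1..n+1. g (lam i)) = (\<Sum>v\<in>lam_vals n lam. g v * n_lam n lam v)"
      unfolding lam_vals_def n_lam_def by (rule count_sum) simp
    also have "\<dots> = (\<Sum>v\<in>V. g v * n_lam n lam v)"
    proof (rule sum.mono_neutral_left[OF fV])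
      show "lam_vals n lam \<subseteq> V" unfolding V_def by auto
      show "\<forall>i\<in>V - lam_vals n lam. g i * real (n_lam n lam i) = 0"
        unfolding lam_vals_def n_lam_def by auto
    qed
    finally show ?thesis .
  qed
  have M: "(\<Sum>i=1..n. g (mu i)) = (\<Sum>v\<in>V. g v * n_mu n mu v)"
  proof -
    have "(\<Sum>i=1..n. g (mu i)) = (\<Sum>v\<in>mu_vals n mu. g v * n_mu n mu v)"
      unfolding mu_vals_def n_mu_def by (rule count_sum) simp
    also have "\<dots> = (\<Sum>v\<in>V. g v * n_mu n mu v)"
    proof (rule sum.mono_neutral_left[OF fV])
      show "mu_vals n mu \<subseteq> V" unfolding V_def by auto
      show "\<forall>i\<in>V - mu_vals n mu. g i * real (n_mu n mu i) = 0"
        unfolding mu_vals_def n_mu_def by auto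
    qed
    finally show ?thesis .
  qed
  have pt: "g v * n_lam n lam v - g v * n_mu n mu v
      = (if W_shape n lam mu v then g v else 0) - (if M_shape n lam mu v then g v else 0)" for v
  proof -
    have "n_lam n lam v \<le> n_mu n mu v + 1" "n_mu n mu v \<le> n_lam n lam v + 1"
      using tri1[OF il] tri2[OF il] by auto
    then have "real (n_lam n lam v) - real (n_mu n mu v)
       = (if W_shape n lam mu v then 1 else 0) - (if M_shape n lam mu v then 1 else 0)"
      unfolding W_shape_def M_shape_def by auto
    then have "g v * (real (n_lam n lam v) - real (n_mu n mu v))
       = g v * ((if W_shape n lam mu v then 1 else 0) - (if M_shape n lam mu v then 1 else 0))"
      by simp
    then show ?thesis by (simp add: right_diff_distrib)
  qed
  have WV: "{l\<in>lam_vals n lam. W_shape n lam mu l} = {v\<in>V. W_shape n lam mu v}"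
  proof -
    have "v \<in> lam_vals n lam" if "W_shape n lam mu v" for v
    proof -
      have "n_lam n lam v \<noteq> 0" using that unfolding W_shape_def by simp
      then have "{i \<in> {1..n+1}. lam i = v} \<noteq> {}" unfolding n_lam_def by (metis card.empty)
      then show ?thesis unfolding lam_vals_def by auto
    qed
    then show ?thesis unfolding V_def by auto
  qed
  have MV: "{s\<in>mu_vals n mu. M_shape n lam mu s} = {v\<in>V. M_shape n lam mu v}"
  proof -
    have "v \<in> mu_vals n mu" if "M_shape n lam mu v" for v
    proof -
      have "n_mu n mu v \<noteq> 0" using that unfolding M_shape_def by simp
      then have "{i \<in> {1..n}. mu i = v} \<noteq> {}" unfolding n_mu_def by (metis card.empty)
      then show ?thesis unfolding mu_vals_def by auto
    qed
    then show ?thesis unfolding V_def by auto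
  qed
  have "(\<Sum>i=1..n+1. g (lam i)) - (\<Sum>i=1..n. g (mu i))
     = (\<Sum>v\<in>V. g v * n_lam n lam v - g v * n_mu n mu v)"
    unfolding L M by (simp add: sum_subtractf)
  also have "\<dots> = (\<Sum>v\<in>V. if W_shape n lam mu v then g v else 0) - (\<Sum>v\<in>V. if M_shape n lam mu v then g v else 0)"
    unfolding pt by (simp add: sum_subtractf)
  also have "\<dots> = (\<Sum>v\<in>{v\<in>V. W_shape n lam mu v}. g v) - (\<Sum>v\<in>{v\<in>V. M_shape n lam mu v}. g v)"
    using fV by (simp add: sum.inter_filter)
  finally show ?thesis unfolding WV MV .
qed



lemma card_P_bounds:
  fixes lam mu :: "nat \<Rightarrow> real" and n :: nat
  assumes il: "\<forall>i\<in>{1..n}. lam i \<ge> mu i \<and> mu i \<ge> lam (i+1)"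
    and up: "\<And>x y::real. x \<le> y \<Longrightarrow> P x \<Longrightarrow> P y"
  shows "card {i\<in>{1..n}. P (mu i)} \<le> card {i\<in>{1..n+1}. P (lam i)}"
    "card {i\<in>{1..n+1}. P (lam i)} \<le> card {i\<in>{1..n}. P (mu i)} + 1"
proof -
  have "{i\<in>{1..n}. P (mu i)} \<subseteq> {i\<in>{1..n+1}. P (lam i)}"
  proof
    fix i assume i: "i \<in> {i\<in>{1..n}. P (mu i)}"
    then have "lam i \<ge> mu i" using il by auto
    then show "i \<in> {i\<in>{1..n+1}. P (lam i)}" using i up by auto
  qed
  then show "card {i\<in>{1..n}. P (mu i)} \<le> card {i\<in>{1..n+1}. P (lam i)}"
    by (intro card_mono) auto
  have "{i\<in>{1..n+1}. P (lam i)} \<subseteq> insert 1 ((\<lambda>i. i+1) ` {i\<in>{1..n}. P (mu i)})"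
  proof
    fix i assume i: "i \<in> {i\<in>{1..n+1}. P (lam i)}"
    show "i \<in> insert 1 ((\<lambda>i. i+1) ` {i\<in>{1..n}. P (mu i)})"
    proof (cases "i = 1")
      case False
      define j where "j = i - 1"
      have j: "i = j+1" "1 \<le> j" "j \<le> n" using i False unfolding j_def by auto
      have "mu j \<ge> lam (j+1)" using il j by auto
      moreover have "P (lam (j+1))" using i j by simp
      ultimately have "P (mu j)" using up by blast
      then show ?thesis using j by auto
    qed simp
  qed
  then have "card {i\<in>{1..n+1}. P (lam i)} \<le> card (insert 1 ((\<lambda>i. i+1) ` {i\<in>{1..n}. P (mu i)}))"
    by (intro card_mono) auto
  also have "\<dots> \<le> card ((\<lambda>i. i+1) ` {i\<in>{1..n}. P (mu i)}) + 1"
    by (simp add: card_insert_le_m1 card_insert_if)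
  also have "\<dots> \<le> card {i\<in>{1..n}. P (mu i)} + 1"
    using card_image_le by (intro add_right_mono card_image_le) auto
  finally show "card {i\<in>{1..n+1}. P (lam i)} \<le> card {i\<in>{1..n}. P (mu i)} + 1" .
qed

lemma card_split:
  "finite I \<Longrightarrow> card {i\<in>I. f i \<ge> (t::real)} = card {i\<in>I. f i > t} + card {i\<in>I. f i = t}"
proof -
  assume fI: "finite I"
  have "{i\<in>I. f i \<ge> t} = {i\<in>I. f i > t} \<union> {i\<in>I. f i = t}" by auto
  moreover have "{i\<in>I. f i > t} \<inter> {i\<in>I. f i = t} = {}" by auto
  ultimately show ?thesis using fI by (simp add: card_Un_disjoint)
qed

lemma M_above:
  fixes lam mu :: "nat \<Rightarrow> real" and n :: nat
  assumes il: "\<forall>i\<in>{1..n}. lam i \<ge> mu i \<and> mu i \<ge> lam (i+1)"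
    and M: "M_shape n lam mu \<tau>"
  shows "card {i\<in>{1..n+1}. lam i > \<tau>} = card {i\<in>{1..n}. mu i > \<tau>} + 1"
proof -
  have b1: "card {i\<in>{1..n}. mu i > \<tau>} \<le> card {i\<in>{1..n+1}. lam i > \<tau>}"
    "card {i\<in>{1..n+1}. lam i > \<tau>} \<le> card {i\<in>{1..n}. mu i > \<tau>} + 1"
    using card_P_bounds[OF il, of "\<lambda>x. x > \<tau>"] by auto
  have b2: "card {i\<in>{1..n}. mu i \<ge> \<tau>} \<le> card {i\<in>{1..n+1}. lam i \<ge> \<tau>}"
    "card {i\<in>{1..n+1}. lam i \<ge> \<tau>} \<le> card {i\<in>{1..n}. mu i \<ge> \<tau>} + 1"
    using card_P_bounds[OF il, of "\<lambda>x. x \<ge> \<tau>"] by auto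
  have s: "card {i\<in>{1..n}. mu i \<ge> \<tau>} = card {i\<in>{1..n}. mu i > \<tau>} + n_mu n mu \<tau>"
    "card {i\<in>{1..n+1}. lam i \<ge> \<tau>} = card {i\<in>{1..n+1}. lam i > \<tau>} + n_lam n lam \<tau>"
    unfolding n_mu_def n_lam_def by (rule card_split, simp)+
  show ?thesis using b1 b2 s M unfolding M_shape_def by linarith
qed

lemma prod_sign:
  fixes f :: "'a \<Rightarrow> real"
  assumes "finite A" "\<forall>a\<in>A. f a \<noteq> 0"
  shows "prod f A = (-1) ^ card {a\<in>A. f a < 0} * prod (\<lambda>a. \<bar>f a\<bar>) A"
  using assms
proof (induction A rule: finite_induct)
  case empty then show ?case by simp
next
  case (insert x F)
  have IH: "prod f F = (-1) ^ card {a\<in>F. f a < 0} * prod (\<lambda>a. \<bar>f a\<bar>) F" using insert by auto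
  show ?case
  proof (cases "f x < 0")
    case True
    have "{a\<in>insert x F. f a < 0} = insert x {a\<in>F. f a < 0}" using True by auto
    moreover have "x \<notin> {a\<in>F. f a < 0}" using insert by auto
    ultimately have "card {a\<in>insert x F. f a < 0} = card {a\<in>F. f a < 0} + 1" using insert by simp
    then show ?thesis using insert IH True by (simp add: abs_if)
  next
    case False
    have "{a\<in>insert x F. f a < 0} = {a\<in>F. f a < 0}" using False by auto
    then show ?thesis using insert IH False by (simp add: abs_if)
  qed
qed



lemma sum_ind_card: "finite I \<Longrightarrow> (\<Sum>i\<in>I. if P i then 1 else 0) = real (card {i\<in>I. P i})"
  by (simp add: sum.inter_filter[symmetric])

lemma W_in_lam: "W_shape n lam mu v \<Longrightarrow> v \<in> lam_vals n lam"
proof -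
  assume "W_shape n lam mu v"
  then have "n_lam n lam v \<noteq> 0" unfolding W_shape_def by simp
  then have "{i \<in> {1..n+1}. lam i = v} \<noteq> {}" unfolding n_lam_def by (metis card.empty)
  then show ?thesis unfolding lam_vals_def by auto
qed

theorem lemma4p5:
  fixes n :: nat and lam mu :: "nat \<Rightarrow> real" and m :: real
  assumes interlace: "\<forall>i\<in>{1..n}. lam i \<ge> mu i \<and> mu i \<ge> lam (i+1)"
    and m_in: "m \<in> mu_vals n mu"
    and not_M: "\<not> M_shape n lam mu m"
  shows "C_coef n lam mu m = 0 \<longleftrightarrow> W_shape n lam mu m"
proof -
  define Ws where "Ws = {l\<in>lam_vals n lam. W_shape n lam mu l}"
  define Ms where "Ms = {s\<in>mu_vals n mu. M_shape n lam mu s}"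
  have fW: "finite Ws" unfolding Ws_def lam_vals_def by auto
  have fM: "finite Ms" unfolding Ms_def mu_vals_def by auto
  have cd: "card Ws = card Ms + 1"
  proof -
    have "(\<Sum>i=1..n+1. (\<lambda>_. 1::real) (lam i)) - (\<Sum>i=1..n. (\<lambda>_. 1::real) (mu i))
       = (\<Sum>v\<in>Ws. (\<lambda>_. 1::real) v) - (\<Sum>v\<in>Ms. (\<lambda>_. 1::real) v)"
      unfolding Ws_def Ms_def by (rule count_diff[OF interlace])
    then have "real (card Ws) - real (card Ms) = 1" by simp
    then show ?thesis by linarith
  qed
  have sd: "(\<Sum>i=1..n+1. lam i) - (\<Sum>i=1..n. mu i) = \<Sum>Ws - \<Sum>Ms"
    using count_diff[OF interlace, of "\<lambda>x. x"] unfolding Ws_def Ms_def by simp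
  define a where "a \<tau> = (\<Prod>l\<in>Ws. \<tau> - l) * (\<Prod>s\<in>Ms-{\<tau>}. 1/(\<tau>-s))" for \<tau>
  have rsq: "r_sq_expr n lam mu \<tau> = - a \<tau>" for \<tau>
  proof -
    have "{\<sigma> \<in> mu_vals n mu. M_shape n lam mu \<sigma> \<and> \<sigma> \<noteq> \<tau>} = Ms - {\<tau>}" unfolding Ms_def by auto
    then show ?thesis unfolding r_sq_expr_def a_def Ws_def by simp
  qed
  have apos: "a \<tau> \<le> 0" if tM: "\<tau> \<in> Ms" for \<tau>
  proof -
    have Mt: "M_shape n lam mu \<tau>" using tM Ms_def by simp
    have tW: "\<tau> \<notin> Ws" using Mt unfolding Ws_def W_shape_def M_shape_def by auto
    have "(\<Sum>i=1..n+1. (\<lambda>v. if v > \<tau> then 1 else 0::real) (lam i)) - (\<Sum>i=1..n. (\<lambda>v. if v > \<tau> then 1 else 0::real) (mu i))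
       = (\<Sum>v\<in>Ws. (\<lambda>v. if v > \<tau> then 1 else 0::real) v) - (\<Sum>v\<in>Ms. (\<lambda>v. if v > \<tau> then 1 else 0::real) v)"
      unfolding Ws_def Ms_def by (rule count_diff[OF interlace])
    then have "real (card {i\<in>{1..n+1}. lam i > \<tau>}) - real (card {i\<in>{1..n}. mu i > \<tau>})
       = real (card {v\<in>Ws. v > \<tau>}) - real (card {v\<in>Ms. v > \<tau>})"
      using fW fM
      by (simp only: sum_ind_card[of "{1..n+1}"] sum_ind_card[of "{1..n}"] sum_ind_card[of Ws] sum_ind_card[of Ms] finite_atLeastAtMost)
    then have cc: "card {v\<in>Ws. v > \<tau>} = card {v\<in>Ms. v > \<tau>} + 1"
      using M_above[OF interlace Mt] by simp
    have s1: "(\<Prod>l\<in>Ws. \<tau> - l) = (-1) ^ card {v\<in>Ws. v > \<tau>} * (\<Prod>l\<in>Ws. \<bar>\<tau> - l\<bar>)"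
    proof -
      have "{l\<in>Ws. \<tau> - l < 0} = {v\<in>Ws. v > \<tau>}" by auto
      moreover have "\<forall>l\<in>Ws. \<tau> - l \<noteq> 0" using tW by auto
      ultimately show ?thesis using prod_sign[OF fW, of "\<lambda>l. \<tau> - l"] by simp
    qed
    have s2: "(\<Prod>s\<in>Ms-{\<tau>}. 1/(\<tau>-s)) = (-1) ^ card {v\<in>Ms. v > \<tau>} * (\<Prod>s\<in>Ms-{\<tau>}. \<bar>1/(\<tau>-s)\<bar>)"
    proof -
      have "{s\<in>Ms-{\<tau>}. 1/(\<tau>-s) < 0} = {v\<in>Ms. v > \<tau>}" by auto
      moreover have "\<forall>s\<in>Ms-{\<tau>}. 1/(\<tau>-s) \<noteq> 0" by auto
      moreover have "finite (Ms - {\<tau>})" using fM by simp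
      ultimately show ?thesis using prod_sign[of "Ms-{\<tau>}" "\<lambda>s. 1/(\<tau>-s)"] by simp
    qed
    have X: "(\<Prod>l\<in>Ws. \<bar>\<tau> - l\<bar>) \<ge> 0" "(\<Prod>s\<in>Ms-{\<tau>}. \<bar>1/(\<tau>-s)\<bar>) \<ge> 0"
      by (simp_all add: prod_nonneg)
    have "a \<tau> = - ((\<Prod>l\<in>Ws. \<bar>\<tau> - l\<bar>) * (\<Prod>s\<in>Ms-{\<tau>}. \<bar>1/(\<tau>-s)\<bar>))"
      unfolding a_def s1 s2 cc by (simp add: power_add)
    then show ?thesis using X by (simp add: mult_nonneg_nonneg)
  qed
  have rc: "(r_coef n lam mu \<tau>)^2 = - a \<tau>" if "\<tau> \<in> Ms" for \<tau>
    using that apos[OF that] rsq[of \<tau>] unfolding r_coef_def Ms_def by simp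
  have mM: "m \<notin> Ms" using not_M Ms_def by simp
  have C: "C_coef n lam mu m = \<Sum>Ws - \<Sum>Ms - m - (\<Sum>\<tau>\<in>Ms. a \<tau>/(m-\<tau>))"
  proof -
    have "(\<Sum>\<tau>\<in>Ms. (r_coef n lam mu \<tau>)^2/(m-\<tau>)) = (\<Sum>\<tau>\<in>Ms. - (a \<tau>/(m-\<tau>)))"
      using rc by (intro sum.cong) auto
    then show ?thesis unfolding C_coef_def Ms_def[symmetric] sd by (simp add: sum_negf)
  qed
  have "(\<Prod>w\<in>Ws. m-w)/(\<Prod>s\<in>Ms. m-s) = m - (\<Sum>Ws - \<Sum>Ms) + (\<Sum>s\<in>Ms. a s/(m-s))"
    using pf[OF fM fW cd mM] unfolding a_def .
  then have Ceq: "C_coef n lam mu m = - ((\<Prod>w\<in>Ws. m-w)/(\<Prod>s\<in>Ms. m-s))"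
    unfolding C by simp
  have Qne: "(\<Prod>s\<in>Ms. m-s) \<noteq> 0" using mM fM by auto
  have "C_coef n lam mu m = 0 \<longleftrightarrow> (\<Prod>w\<in>Ws. m-w) = 0" unfolding Ceq using Qne by simp
  also have "\<dots> \<longleftrightarrow> m \<in> Ws" using fW by auto
  also have "\<dots> \<longleftrightarrow> W_shape n lam mu m" unfolding Ws_def using W_in_lam by blast
  finally show ?thesis .
qed

end
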